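(* For each even integer $r\ge 2$, there are infinitely many $r$-regular graphs $G$ of even order with $\chi_{la}(G)=3$ and chromatic number $\chi(G)=2$.
   Context: For a connected graph $G=(V,E)$ with $q=|E|$, a local antimagic labeling is a bijection $f:E\to\{1,\dots,q\}$ such that adjacent vertices $x,y$ satisfy $f^+(x)\ne f^+(y)$, where $f^+(x)=\sum f(e)$ over edges $e$ incident to $x$; the local antimagic chromatic number $\chi_{la}(G)$ is the minimum number of distinct values of $f^+$ over all local antimagic labelings $f$ of $G$. *)

theory Defs
  imports Main
begin

definition simple_graph :: "'a set \<Rightarrow> 'a set set \<Rightarrow> bool" where
  "simple_graph V E \<longleftrightarrow> finite V \<and> (\<forall>e\<in>E. e \<subseteq> V \<and> card e = 2)"

definition incident_edges :: "'a set set \<Rightarrow> 'a \<Rightarrow> 'a set set" where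
  "incident_edges E x = {e\<in>E. x \<in> e}"

definition degree :: "'a set set \<Rightarrow> 'a \<Rightarrow> nat" where
  "degree E x = card (incident_edges E x)"

definition regular :: "'a set \<Rightarrow> 'a set set \<Rightarrow> nat \<Rightarrow> bool" where
  "regular V E r \<longleftrightarrow> (\<forall>x\<in>V. degree E x = r)"

definition connected_graph :: "'a set \<Rightarrow> 'a set set \<Rightarrow> bool" where
  "connected_graph V E \<longleftrightarrow> V \<noteq> {} \<and>
     (\<forall>x\<in>V. \<forall>y\<in>V. (x, y) \<in> {(u, v). {u, v} \<in> E}\<^sup>*)"

definition vsum :: "'a set set \<Rightarrow> ('a set \<Rightarrow> nat) \<Rightarrow> 'a \<Rightarrow> nat" where
  "vsum E f x = (\<Sum>e\<in>incident_edges E x. f e)"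

definition local_antimagic :: "'a set \<Rightarrow> 'a set set \<Rightarrow> ('a set \<Rightarrow> nat) \<Rightarrow> bool" where
  "local_antimagic V E f \<longleftrightarrow> bij_betw f E {1..card E} \<and>
     (\<forall>x\<in>V. \<forall>y\<in>V. {x, y} \<in> E \<longrightarrow> vsum E f x \<noteq> vsum E f y)"

text \<open>Local antimagic chromatic number (Inf of the empty set of naturals is 0).\<close>
definition chi_la :: "'a set \<Rightarrow> 'a set set \<Rightarrow> nat" where
  "chi_la V E = Inf {k. \<exists>f. local_antimagic V E f \<and> card (vsum E f ` V) = k}"

definition proper_colouring :: "'a set \<Rightarrow> 'a set set \<Rightarrow> nat \<Rightarrow> ('a \<Rightarrow> nat) \<Rightarrow> bool" where
  "proper_colouring V E k c \<longleftrightarrow> (\<forall>x\<in>V. c x < k) \<and>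
     (\<forall>x\<in>V. \<forall>y\<in>V. {x, y} \<in> E \<longrightarrow> c x \<noteq> c y)"

definition chromatic_number :: "'a set \<Rightarrow> 'a set set \<Rightarrow> nat" where
  "chromatic_number V E = Inf {k. \<exists>c. proper_colouring V E k c}"

end

theory Submission
  imports Defs
begin



lemma double_count:
  assumes "finite X" "finite E"
  shows "(\<Sum>v\<in>X. \<Sum>e\<in>{e\<in>E. v\<in>e}. w e) = (\<Sum>e\<in>E. w e * card (X \<inter> e))"
proof -
  have "(\<Sum>v\<in>X. \<Sum>e\<in>{e\<in>E. v\<in>e}. w e) = (\<Sum>v\<in>X. \<Sum>e\<in>E. if v \<in> e then w e else 0)"
    using assms by (simp add: sum.inter_filter)
  also have "\<dots> = (\<Sum>e\<in>E. \<Sum>v\<in>X. if v \<in> e then w e else 0)"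
    by (rule sum.swap)
  also have "\<dots> = (\<Sum>e\<in>E. w e * card (X \<inter> e))"
  proof (rule sum.cong)
    fix e assume "e \<in> E"
    have "(\<Sum>v\<in>X. if v \<in> e then w e else 0) = (\<Sum>v\<in>{v\<in>X. v\<in>e}. w e)"
      by (simp only: sum.inter_filter[OF assms(1)])
    also have "{v\<in>X. v\<in>e} = X \<inter> e" by auto
    finally show "(\<Sum>v\<in>X. if v \<in> e then w e else 0) = w e * card (X \<inter> e)" by simp
  qed simp
  finally show ?thesis .
qed

lemma chi_lower:
  assumes sg: "simple_graph V E" and reg: "regular V E r" and r0: "r > 0"
    and la: "local_antimagic V E f" and ne: "E \<noteq> {}"
  shows "3 \<le> card (vsum E f ` V)"
proof -
  have fV: "finite V" using sg by (simp add: simple_graph_def)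
  have EV: "\<And>e. e \<in> E \<Longrightarrow> e \<subseteq> V \<and> card e = 2" using sg by (simp add: simple_graph_def)
  have fE: "finite E"
  proof -
    have "E \<subseteq> Pow V" using EV by auto
    thus ?thesis using fV finite_subset by blast
  qed
  have adj: "\<And>x y. x \<in> V \<Longrightarrow> y \<in> V \<Longrightarrow> {x,y} \<in> E \<Longrightarrow> vsum E f x \<noteq> vsum E f y"
    using la by (simp add: local_antimagic_def)
  have edge2: "\<And>e. e \<in> E \<Longrightarrow> \<exists>x y. e = {x,y} \<and> x \<noteq> y \<and> x \<in> V \<and> y \<in> V"
  proof -
    fix e assume "e \<in> E"
    then have "card e = 2" "e \<subseteq> V" using EV by auto
    then obtain x y where "e = {x,y}" "x \<noteq> y" by (meson card_2_iff)
    thus "\<exists>x y. e = {x,y} \<and> x \<noteq> y \<and> x \<in> V \<and> y \<in> V" using \<open>e \<subseteq> V\<close> by auto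
  qed
  obtain e0 where e0: "e0 \<in> E" using ne by auto
  then obtain x y where xy: "e0 = {x,y}" "x \<noteq> y" "x \<in> V" "y \<in> V" using edge2 by blast
  let ?F = "vsum E f"
  have dxy: "?F x \<noteq> ?F y" using adj xy e0 by auto
  have fin: "finite (?F ` V)" using fV by simp
  have c2: "2 \<le> card (?F ` V)"
  proof -
    have "{?F x, ?F y} \<subseteq> ?F ` V" using xy by auto
    hence "card {?F x, ?F y} \<le> card (?F ` V)" using fin card_mono by blast
    thus ?thesis using dxy by simp
  qed
  show ?thesis
  proof (rule ccontr)
    assume "\<not> 3 \<le> card (?F ` V)"
    hence c: "card (?F ` V) = 2" using c2 by simp
    have img: "?F ` V = {?F x, ?F y}"
    proof -
      have "{?F x, ?F y} \<subseteq> ?F ` V" using xy by auto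
      moreover have "card {?F x, ?F y} = card (?F ` V)" using c dxy by simp
      ultimately show ?thesis using fin card_subset_eq by metis
    qed
    define X where "X = {v\<in>V. ?F v = ?F x}"
    define Y where "Y = {v\<in>V. ?F v = ?F y}"
    have fX: "finite X" "finite Y" using fV by (auto simp: X_def Y_def)
    have one: "card (X \<inter> e) = 1 \<and> card (Y \<inter> e) = 1" if "e \<in> E" for e
    proof -
      obtain u w where uw: "e = {u,w}" "u \<noteq> w" "u \<in> V" "w \<in> V" using edge2 \<open>e \<in> E\<close> by blast
      have d: "?F u \<noteq> ?F w" using adj uw \<open>e \<in> E\<close> by auto
      have "?F u \<in> {?F x, ?F y}" "?F w \<in> {?F x, ?F y}" using img uw by blast+
      then have "(?F u = ?F x \<and> ?F w = ?F y) \<or> (?F u = ?F y \<and> ?F w = ?F x)" using d by auto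
      then show ?thesis using uw dxy unfolding X_def Y_def
        by (auto simp: Int_insert_right)
    qed
    have inc: "\<And>v. incident_edges E v = {e\<in>E. v\<in>e}" by (simp add: incident_edges_def)
    have sX: "(\<Sum>v\<in>X. ?F v) = (\<Sum>e\<in>E. f e)"
      using double_count[OF fX(1) fE, of f] one by (simp add: vsum_def inc)
    have sY: "(\<Sum>v\<in>Y. ?F v) = (\<Sum>e\<in>E. f e)"
      using double_count[OF fX(2) fE, of f] one by (simp add: vsum_def inc)
    have dX: "(\<Sum>v\<in>X. degree E v) = card E"
      using double_count[OF fX(1) fE, of "\<lambda>_. 1"] one by (simp add: degree_def inc)
    have dY: "(\<Sum>v\<in>Y. degree E v) = card E"
      using double_count[OF fX(2) fE, of "\<lambda>_. 1"] one by (simp add: degree_def inc)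
    have "(\<Sum>v\<in>X. degree E v) = card X * r" using reg by (simp add: regular_def X_def)
    moreover have "(\<Sum>v\<in>Y. degree E v) = card Y * r" using reg by (simp add: regular_def Y_def)
    ultimately have cXY: "card X = card Y" using dX dY r0 by simp
    have "(\<Sum>v\<in>X. ?F v) = card X * ?F x" by (simp add: X_def)
    moreover have "(\<Sum>v\<in>Y. ?F v) = card Y * ?F y" by (simp add: Y_def)
    moreover have "card X > 0" using fX xy by (auto simp: X_def card_gt_0_iff)
    ultimately have "?F x = ?F y" using sX sY cXY by simp
    thus False using dxy by simp
  qed
qed




lemma divmod_eq:
  fixes s :: nat
  assumes "x < s" "y < s"
  shows "(p*s + x = q*s + y) \<longleftrightarrow> p = q \<and> x = y"
proof
  assume h: "p*s + x = q*s + y"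
  have "(p*s + x) div s = p" "(p*s+x) mod s = x" using assms by auto
  moreover have "(q*s + y) div s = q" "(q*s+y) mod s = y" using assms by auto
  ultimately show "p = q \<and> x = y" using h by metis
qed simp

lemma sum_gauss2: "2 * (\<Sum>b<n. b) = n * (n - 1::nat)"
proof (induction n)
  case (Suc n)
  then show ?case by (cases n) (auto simp: algebra_simps)
qed simp

locale cyc =
  fixes s m :: nat
  assumes s1: "1 \<le> s" and me: "even m" and m4: "4 \<le> m"
begin

definition enc :: "nat \<Rightarrow> nat \<Rightarrow> nat" where "enc i a = i*s + a"
definition D :: "(nat \<times> nat \<times> nat) set" where "D = {..<m} \<times> {..<s} \<times> {..<s}"
definition edg :: "nat \<times> nat \<times> nat \<Rightarrow> nat set" where
  "edg t = (case t of (i,a,b) \<Rightarrow> {enc i a, enc (Suc i mod m) b})"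
definition VV :: "nat set" where "VV = {..<m*s}"
definition EE :: "nat set set" where "EE = edg ` D"
definition g :: "nat \<Rightarrow> nat" where "g i = (if even i then i div 2 else m - 1 - i div 2)"
definition L :: "nat \<Rightarrow> nat \<Rightarrow> nat \<Rightarrow> nat" where
  "L i a b = (if even i then (s-1-a) + s*b else s*(s-1-a) + b)"
definition lab :: "nat \<times> nat \<times> nat \<Rightarrow> nat" where
  "lab t = (case t of (i,a,b) \<Rightarrow> s*s*g i + L i a b + 1)"
definition ff :: "nat set \<Rightarrow> nat" where "ff e = lab (inv_into D edg e)"
definition prv :: "nat \<Rightarrow> nat" where "prv j = (if j = 0 then m-1 else j-1)"
definition K :: nat where "K = s*(s-1) + s*s*(s-1) + 2*s"
definition hh :: "nat \<Rightarrow> nat" where "hh j = (if j = 0 then m div 2 else if odd j then m-1 else m)"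

lemma edg_simp[simp]: "edg (i,a,b) = {enc i a, enc (Suc i mod m) b}"
  by (simp add: edg_def)
lemma lab_simp[simp]: "lab (i,a,b) = s*s*g i + L i a b + 1"
  by (simp add: lab_def)

lemma s0: "s > 0" using s1 by simp

lemma enc_eq: "a < s \<Longrightarrow> c < s \<Longrightarrow> enc i a = enc j c \<longleftrightarrow> i = j \<and> a = c"
  unfolding enc_def by (rule divmod_eq)

lemma enc_lt: "i < m \<Longrightarrow> a < s \<Longrightarrow> enc i a < m*s"
proof -
  assume "i < m" "a < s"
  hence "Suc i \<le> m" by simp
  hence "Suc i * s \<le> m * s" by (rule mult_right_mono) simp
  thus ?thesis using \<open>a < s\<close> by (simp add: enc_def)
qed

lemma enc_div: "a < s \<Longrightarrow> enc i a div s = i"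
  by (simp add: enc_def)

lemma V_enc: "v < m*s \<Longrightarrow> v = enc (v div s) (v mod s) \<and> v div s < m \<and> v mod s < s"
  using s0 by (auto simp: enc_def less_mult_imp_div_less)

lemma suc_mod: "i < m \<Longrightarrow> Suc i mod m = (if Suc i = m then 0 else Suc i)"
  by auto

lemma suc_mod_lt: "i < m \<Longrightarrow> Suc i mod m < m"
  using m4 by simp

lemma suc_mod_parity: "i < m \<Longrightarrow> even (Suc i mod m) \<longleftrightarrow> odd i"
  using me by (auto simp: suc_mod)

lemma inj_edg: "inj_on edg D"
proof (rule inj_onI)
  fix t t' assume "t \<in> D" "t' \<in> D" "edg t = edg t'"
  then obtain i a b i' a' b' where t: "t = (i,a,b)" "t' = (i',a',b')"
    and b: "i < m" "a < s" "b < s" "i' < m" "a' < s" "b' < s"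
    by (auto simp: D_def)
  have e: "{enc i a, enc (Suc i mod m) b} = {enc i' a', enc (Suc i' mod m) b'}"
    using \<open>edg t = edg t'\<close> t by simp
  show "t = t'"
  proof (cases "enc i a = enc i' a'")
    case True
    then have "enc (Suc i mod m) b = enc (Suc i' mod m) b'" using e by (auto simp: doubleton_eq_iff)
    then show ?thesis using True b t enc_eq by simp
  next
    case False
    then have "enc i a = enc (Suc i' mod m) b'" "enc (Suc i mod m) b = enc i' a'"
      using e by (auto simp: doubleton_eq_iff)
    then have "i = Suc i' mod m" "Suc i mod m = i'" using b enc_eq by auto
    then show ?thesis using b m4 by (auto simp: suc_mod split: if_splits)
  qed
qed

lemma finD: "finite D" by (simp add: D_def)
lemma cardD: "card D = m*s*s" by (simp add: D_def card_cartesian_product)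

lemma bij_edg: "bij_betw edg D EE"
  using inj_edg by (simp add: bij_betw_def EE_def)

lemma cardE: "card EE = m*s*s"
  using bij_edg cardD bij_betw_same_card by metis

lemma edge_in: "i < m \<Longrightarrow> a < s \<Longrightarrow> b < s \<Longrightarrow> {enc i a, enc (Suc i mod m) b} \<in> EE"
proof -
  assume "i < m" "a < s" "b < s"
  hence "(i,a,b) \<in> D" by (simp add: D_def)
  hence "edg (i,a,b) \<in> EE" unfolding EE_def by (rule imageI)
  thus ?thesis by simp
qed

lemma edge_cases:
  assumes "{x,y} \<in> EE"
  obtains i a b where "i < m" "a < s" "b < s"
    "(x = enc i a \<and> y = enc (Suc i mod m) b) \<or> (y = enc i a \<and> x = enc (Suc i mod m) b)"
proof -
  from assms obtain t where "t \<in> D" "{x,y} = edg t" by (auto simp: EE_def)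
  then obtain i a b where "t = (i,a,b)" "i < m" "a < s" "b < s" by (auto simp: D_def)
  then show ?thesis using that \<open>{x,y} = edg t\<close> by (auto simp: doubleton_eq_iff)
qed

end


lemma gi: assumes "even (m::nat)" "i < m" "i' < m" "(if even i then i div 2 else m - 1 - i div 2) = (if even i' then i' div 2 else m - 1 - i' div 2)" shows "i = i'"
proof -
  obtain k where k: "m = 2*k" using assms(1) by blast
  define q where "q = i div 2"
  define q' where "q' = i' div 2"
  have ev: "even i \<Longrightarrow> i = 2*q" "odd i \<Longrightarrow> i = 2*q+1" "even i' \<Longrightarrow> i' = 2*q'" "odd i' \<Longrightarrow> i' = 2*q'+1"
    unfolding q_def q'_def by (simp_all add: odd_two_times_div_two_succ)
  have e: "(if even i then q else m - 1 - q) = (if even i' then q' else m - 1 - q')"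
    using assms(4) unfolding q_def q'_def .
  show ?thesis
  proof (cases "even i"; cases "even i'")
    assume "even i" "even i'" then show ?thesis using e ev by simp
  next
    assume "odd i" "odd i'" then show ?thesis using e ev assms k by simp
  next
    assume a: "even i" "odd i'"
    then have "q = m - 1 - q'" "i = 2*q" "i' = 2*q'+1" using e ev by auto
    then show ?thesis using assms k by linarith
  next
    assume a: "odd i" "even i'"
    then have "q' = m - 1 - q" "i = 2*q+1" "i' = 2*q'" using e ev by auto
    then show ?thesis using assms k by linarith
  qed
qed

context cyc begin

lemma g_bound: "i < m \<Longrightarrow> g i < m"
  using me m4 by (auto simp: g_def)

lemma g_inj: "i < m \<Longrightarrow> i' < m \<Longrightarrow> g i = g i' \<Longrightarrow> i = i'"
  unfolding g_def using gi me by blast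

lemma L_bound: "a < s \<Longrightarrow> b < s \<Longrightarrow> L i a b < s*s"
proof -
  assume a: "a < s" "b < s"
  obtain t where st: "s = Suc t" using s1 by (cases s) auto
  have b1: "b \<le> t" "s - 1 - a \<le> t" using a st by auto
  have "s*b \<le> s*t" "s*(s-1-a) \<le> s*t" using b1 by auto
  moreover have "s*s = s*t + t + 1" using st by simp
  ultimately have "L i a b \<le> s*t + t"
  proof (cases "even i")
    case True
    then have "L i a b = s-1-a + s*b" by (simp add: L_def)
    then show ?thesis using b1 \<open>s*b \<le> s*t\<close> by linarith
  next
    case False
    then have "L i a b = s*(s-1-a) + b" by (simp add: L_def)
    then show ?thesis using b1 \<open>s*(s-1-a) \<le> s*t\<close> by linarith
  qed
  thus ?thesis using \<open>s*s = s*t + t + 1\<close> by linarith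
qed

lemma L_inj: "a < s \<Longrightarrow> b < s \<Longrightarrow> a' < s \<Longrightarrow> b' < s \<Longrightarrow> L i a b = L i a' b' \<Longrightarrow> a = a' \<and> b = b'"
proof -
  assume a: "a < s" "b < s" "a' < s" "b' < s" and e: "L i a b = L i a' b'"
  show ?thesis
  proof (cases "even i")
    case True
    then have "b*s + (s-1-a) = b'*s + (s-1-a')" using e by (simp add: L_def mult.commute add.commute)
    then have "b = b' \<and> s-1-a = s-1-a'" using divmod_eq[of "s-1-a" s "s-1-a'"] a by auto
    then show ?thesis using a by auto
  next
    case False
    then have "(s-1-a)*s + b = (s-1-a')*s + b'" using e by (simp add: L_def mult.commute add.commute)
    then have "b = b' \<and> s-1-a = s-1-a'" using divmod_eq[of b s b'] a by auto
    then show ?thesis using a by auto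
  qed
qed

lemma inj_lab: "inj_on lab D"
proof (rule inj_onI)
  fix t t' assume "t \<in> D" "t' \<in> D" "lab t = lab t'"
  then obtain i a b i' a' b' where t: "t = (i,a,b)" "t' = (i',a',b')"
    and b: "i < m" "a < s" "b < s" "i' < m" "a' < s" "b' < s"
    by (auto simp: D_def)
  have "g i * (s*s) + L i a b = g i' * (s*s) + L i' a' b'"
    using \<open>lab t = lab t'\<close> t by (simp add: mult.commute)
  moreover have "L i a b < s*s" "L i' a' b' < s*s" using L_bound b by auto
  ultimately have "g i = g i' \<and> L i a b = L i' a' b'"
    using divmod_eq[of "L i a b" "s*s" "L i' a' b'" "g i" "g i'"] by simp
  then have "i = i'" "L i a b = L i a' b'" using g_inj b by auto
  then show "t = t'" using L_inj b t by auto
qed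

lemma lab_range: "t \<in> D \<Longrightarrow> lab t \<in> {1..m*s*s}"
proof -
  assume "t \<in> D"
  then obtain i a b where t: "t = (i,a,b)" and b: "i < m" "a < s" "b < s" by (auto simp: D_def)
  have "g i \<le> m - 1" using g_bound b by fastforce
  hence "s*s*g i \<le> s*s*(m-1)" by simp
  moreover have "L i a b < s*s" using L_bound b by simp
  moreover have "s*s*(m-1) + s*s = m*s*s" using m4 by (cases m) (auto simp: algebra_simps)
  ultimately have "s*s*g i + L i a b + 1 \<le> m*s*s" by linarith
  thus ?thesis using t by simp
qed

lemma bij_lab: "bij_betw lab D {1..m*s*s}"
proof -
  have "lab ` D \<subseteq> {1..m*s*s}" using lab_range by auto
  moreover have "card (lab ` D) = card {1..m*s*s}" using card_image[OF inj_lab] cardD by simp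
  ultimately have "lab ` D = {1..m*s*s}" by (simp add: card_subset_eq)
  thus ?thesis using inj_lab by (simp add: bij_betw_def)
qed

lemma bij_ff: "bij_betw ff EE {1..card EE}"
proof -
  have "bij_betw (inv_into D edg) EE D" using bij_edg by (rule bij_betw_inv_into)
  hence "bij_betw (lab \<circ> inv_into D edg) EE {1..m*s*s}" using bij_lab by (rule bij_betw_trans)
  thus ?thesis using cardE by (simp add: ff_def[abs_def] comp_def)
qed

lemma prv_lt: "j < m \<Longrightarrow> prv j < m" using m4 by (auto simp: prv_def)
lemma prv_ne: "j < m \<Longrightarrow> prv j \<noteq> j" using m4 by (auto simp: prv_def)
lemma prv_iff: "i < m \<Longrightarrow> j < m \<Longrightarrow> Suc i mod m = j \<longleftrightarrow> i = prv j"
  using m4 by (auto simp: prv_def suc_mod)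

lemma inc_set:
  assumes j: "j < m" "c < s"
  shows "{t\<in>D. enc j c \<in> edg t} = (\<lambda>b. (j,c,b)) ` {..<s} \<union> (\<lambda>a. (prv j,a,c)) ` {..<s}"
proof (intro set_eqI iffI)
  fix t assume "t \<in> {t\<in>D. enc j c \<in> edg t}"
  then obtain i a b where t: "t = (i,a,b)" and b: "i < m" "a < s" "b < s"
    and h: "enc j c = enc i a \<or> enc j c = enc (Suc i mod m) b" by (auto simp: D_def)
  have "(j = i \<and> c = a) \<or> (j = Suc i mod m \<and> c = b)"
    using h enc_eq b j by auto
  then have "(j = i \<and> c = a) \<or> (i = prv j \<and> c = b)"
    using prv_iff b j by metis
  then show "t \<in> (\<lambda>b. (j,c,b)) ` {..<s} \<union> (\<lambda>a. (prv j,a,c)) ` {..<s}"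
    using t b by auto
next
  fix t assume "t \<in> (\<lambda>b. (j,c,b)) ` {..<s} \<union> (\<lambda>a. (prv j,a,c)) ` {..<s}"
  then show "t \<in> {t\<in>D. enc j c \<in> edg t}"
  proof
    assume "t \<in> (\<lambda>b. (j,c,b)) ` {..<s}"
    then show ?thesis using j by (auto simp: D_def)
  next
    assume "t \<in> (\<lambda>a. (prv j,a,c)) ` {..<s}"
    then obtain a where "t = (prv j, a, c)" "a < s" by auto
    moreover have "Suc (prv j) mod m = j" using prv_iff prv_lt j by metis
    ultimately show ?thesis using j prv_lt by (auto simp: D_def)
  qed
qed

lemma sum_inc:
  assumes j: "j < m" "c < s"
  shows "(\<Sum>e\<in>incident_edges EE (enc j c). w (inv_into D edg e))
         = (\<Sum>b<s. w (j,c,b)) + (\<Sum>a<s. w (prv j,a,c))"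
proof -
  let ?T = "{t\<in>D. enc j c \<in> edg t}"
  have ie: "incident_edges EE (enc j c) = edg ` ?T"
    by (auto simp: incident_edges_def EE_def)
  have injT: "inj_on edg ?T" using inj_edg by (rule inj_on_subset) auto
  have "(\<Sum>e\<in>incident_edges EE (enc j c). w (inv_into D edg e)) = (\<Sum>t\<in>?T. w (inv_into D edg (edg t)))"
    unfolding ie using injT by (simp add: sum.reindex)
  also have "\<dots> = (\<Sum>t\<in>?T. w t)"
    by (rule sum.cong) (auto simp: inv_into_f_f[OF inj_edg])
  also have "\<dots> = (\<Sum>t\<in>(\<lambda>b. (j,c,b)) ` {..<s}. w t) + (\<Sum>t\<in>(\<lambda>a. (prv j,a,c)) ` {..<s}. w t)"
    unfolding inc_set[OF j] by (rule sum.union_disjoint) (use prv_ne[OF j(1)] in auto)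
  also have "\<dots> = (\<Sum>b<s. w (j,c,b)) + (\<Sum>a<s. w (prv j,a,c))"
    by (simp add: sum.reindex inj_on_def)
  finally show ?thesis .
qed

end


context cyc begin

lemma prv_parity: "j < m \<Longrightarrow> even (prv j) \<longleftrightarrow> odd j"
  using me m4 by (auto simp: prv_def)

lemma g_even: "even i \<Longrightarrow> g i = i div 2" by (simp add: g_def)
lemma g_odd: "odd i \<Longrightarrow> g i = m - 1 - i div 2" by (simp add: g_def)

lemma hh_eq: "j < m \<Longrightarrow> g j + g (prv j) = hh j"
proof -
  assume j: "j < m"
  obtain k where k: "m = 2*k" using me by blast
  have k2: "k \<ge> 2" using k m4 by simp
  show ?thesis
  proof (cases "j = 0")
    case True
    have o: "odd (m - 1)" using k k2 by (cases k) auto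
    have d: "(m - 1) div 2 = k - 1" using k k2 by (cases k) auto
    have "g (prv j) = m - 1 - (k - 1)" using True o d g_odd by (simp add: prv_def)
    moreover have "g j = 0" using True by (simp add: g_def)
    moreover have "hh j = m div 2" using True by (simp add: hh_def)
    moreover have "m div 2 = k" using k by simp
    ultimately show ?thesis using k k2 by linarith
  next
    case False
    then have pj: "prv j = j - 1" by (simp add: prv_def)
    obtain q where q: "q = j div 2" by blast
    show ?thesis
    proof (cases "even j")
      case True
      then have jq: "j = 2*q" using q by simp
      then have q1: "q \<ge> 1" using False by simp
      then have "j - 1 = 2*(q-1) + 1" using jq by simp
      then have o: "odd (j-1)" and d: "(j-1) div 2 = q - 1" by simp_all
      have "g j = q" using True q g_even by simp
      moreover have "g (prv j) = m - 1 - (q - 1)" using pj o d g_odd by simp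
      moreover have "hh j = m" using True False by (simp add: hh_def)
      ultimately show ?thesis using q1 jq j by linarith
    next
      case odd: False
      then have jq: "j = 2*q + 1" using q by (simp add: odd_two_times_div_two_succ)
      then have e: "even (j-1)" and d: "(j-1) div 2 = q" by simp_all
      have "g j = m - 1 - q" using odd q g_odd by simp
      moreover have "g (prv j) = q" using pj e d g_even by simp
      moreover have "hh j = m - 1" using odd False by (simp add: hh_def)
      ultimately show ?thesis using jq j by linarith
    qed
  qed
qed

lemma sum_rev: "(\<Sum>a<s. s - 1 - a) = (\<Sum>a<(s::nat). a)"
proof -
  have "(\<Sum>a<s. s - 1 - a) = (\<Sum>a<s. s - Suc a)" by simp
  also have "\<dots> = (\<Sum>a<s. a)" using sum.nat_diff_reindex[of "\<lambda>a. a" s] by simp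
  finally show ?thesis .
qed

lemma Lsum: assumes j: "j < m" "c < s"
  shows "(\<Sum>b<s. L j c b) + (\<Sum>a<s. L (prv j) a c) = s*(s-1) + s*s*(s-1)"
proof -
  define T where "T = (\<Sum>b<s. b)"
  have T2: "2*T = s*(s-1)" unfolding T_def by (rule sum_gauss2)
  have TR: "(\<Sum>a<s. s - Suc a) = T" using sum_rev unfolding T_def by simp
  have TR1: "(\<Sum>a<s. s - 1 - a) = T" unfolding T_def by (rule sum_rev)
  have cc: "(s-1-c) + c = s-1" using j by simp
  show ?thesis
  proof (cases "even j")
    case True
    then have pj: "odd (prv j)" using prv_parity j by simp
    have "(\<Sum>b<s. L j c b) = (\<Sum>b<s. (s-1-c) + s*b)" using True by (simp add: L_def)
    also have "\<dots> = s*(s-1-c) + s*T" by (simp add: sum.distrib sum_distrib_left T_def)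
    finally have 1: "(\<Sum>b<s. L j c b) = s*(s-1-c) + s*T" .
    have "(\<Sum>a<s. L (prv j) a c) = (\<Sum>a<s. s*(s-1-a) + c)" using pj by (simp add: L_def)
    also have "\<dots> = (\<Sum>a<s. s*(s-1-a)) + s*c" by (simp add: sum.distrib)
    also have "\<dots> = s*T + s*c" by (simp add: sum_distrib_left[symmetric] TR)
    finally have 2: "(\<Sum>a<s. L (prv j) a c) = s*T + s*c" .
    have "s*(s-1-c) + s*c = s*(s-1)" using cc by (metis add_mult_distrib2)
    moreover have "s*T + s*T = s*(s*(s-1))" using T2 by (metis mult_2 add_mult_distrib2 mult.assoc mult.commute)
    moreover have "s*(s*(s-1)) = s*s*(s-1)" by (simp add: mult.assoc)
    ultimately show ?thesis using 1 2 by linarith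
  next
    case False
    then have pj: "even (prv j)" using prv_parity j by simp
    have "(\<Sum>b<s. L j c b) = (\<Sum>b<s. s*(s-1-c) + b)" using False by (simp add: L_def)
    also have "\<dots> = s*(s*(s-1-c)) + T" by (simp add: sum.distrib T_def)
    finally have 1: "(\<Sum>b<s. L j c b) = s*(s*(s-1-c)) + T" .
    have "(\<Sum>a<s. L (prv j) a c) = (\<Sum>a<s. (s-1-a) + s*c)" using pj by (simp add: L_def)
    also have "\<dots> = T + s*(s*c)" by (simp only: sum.distrib TR1 sum_constant card_lessThan) simp
    finally have 2: "(\<Sum>a<s. L (prv j) a c) = T + s*(s*c)" .
    have "s*(s*(s-1-c)) + s*(s*c) = s*s*(s-1)" using cc by (metis add_mult_distrib2 mult.assoc)
    then show ?thesis using 1 2 T2 by linarith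
  qed
qed

lemma vsum_val: assumes j: "j < m" "c < s"
  shows "vsum EE ff (enc j c) = s^3 * hh j + K"
proof -
  have "vsum EE ff (enc j c) = (\<Sum>e\<in>incident_edges EE (enc j c). lab (inv_into D edg e))"
    by (simp add: vsum_def ff_def)
  also have "\<dots> = (\<Sum>b<s. lab (j,c,b)) + (\<Sum>a<s. lab (prv j,a,c))"
    by (rule sum_inc[OF j])
  also have "\<dots> = s*(s*s*g j) + s*(s*s*g (prv j)) + ((\<Sum>b<s. L j c b) + (\<Sum>a<s. L (prv j) a c)) + 2*s"
    by (simp only: lab_simp sum.distrib) simp
  also have "\<dots> = s^3 * (g j + g (prv j)) + ((\<Sum>b<s. L j c b) + (\<Sum>a<s. L (prv j) a c)) + 2*s"
    by (simp add: algebra_simps power3_eq_cube)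
  also have "\<dots> = s^3 * (g j + g (prv j)) + K"
    unfolding Lsum[OF j] K_def by (simp only: add.assoc)
  finally show ?thesis using hh_eq j by simp
qed

lemma deg_val: assumes j: "j < m" "c < s"
  shows "degree EE (enc j c) = 2*s"
proof -
  have "(\<Sum>e\<in>incident_edges EE (enc j c). (1::nat)) = (\<Sum>b<s. 1) + (\<Sum>a<s. 1)"
    using sum_inc[OF j, of "\<lambda>_. 1::nat"] by simp
  then show ?thesis by (simp add: degree_def)
qed

end


context cyc begin

lemma VV_cases: assumes "v \<in> VV" obtains j c where "j < m" "c < s" "v = enc j c"
  using V_enc assms by (auto simp: VV_def)

lemma enc_in: "j < m \<Longrightarrow> c < s \<Longrightarrow> enc j c \<in> VV"
  using enc_lt by (simp add: VV_def)

lemma simple: "simple_graph VV EE"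
proof -
  have "e \<subseteq> VV \<and> card e = 2" if "e \<in> EE" for e
  proof -
    from that obtain i a b where b: "i < m" "a < s" "b < s" and e: "e = {enc i a, enc (Suc i mod m) b}"
      by (auto simp: EE_def D_def)
    have "Suc i mod m \<noteq> i" using b m4 by (auto simp: suc_mod)
    then have "enc i a \<noteq> enc (Suc i mod m) b" using enc_eq b by auto
    moreover have "e \<subseteq> VV" using e b enc_in suc_mod_lt by auto
    ultimately show ?thesis using e by simp
  qed
  thus ?thesis by (simp add: simple_graph_def VV_def)
qed

lemma regular: "regular VV EE (2*s)"
  unfolding regular_def using deg_val by (auto elim!: VV_cases)

lemma cardV: "card VV = m*s" by (simp add: VV_def)

lemma hh_vals: "j < m \<Longrightarrow> hh j \<in> {m div 2, m - 1, m}"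
  by (auto simp: hh_def)

lemma hh_diff: "j < m \<Longrightarrow> j' < m \<Longrightarrow> even j \<longleftrightarrow> odd j' \<Longrightarrow> hh j \<noteq> hh j'"
proof -
  assume a: "j < m" "j' < m" "even j \<longleftrightarrow> odd j'"
  have "m div 2 \<noteq> m - 1" using m4 me by (auto elim!: evenE)
  moreover have "m \<noteq> m - 1" using m4 by simp
  moreover have "odd j \<Longrightarrow> 0 < j" "odd j' \<Longrightarrow> 0 < j'" by (auto intro: Nat.gr0I)
  ultimately show ?thesis using a by (auto simp: hh_def)
qed

lemma s3: "s^3 > 0" using s0 by simp

lemma adj_layers:
  assumes "{x,y} \<in> EE"
  obtains i i' a b where "i < m" "i' < m" "a < s" "b < s" "even i \<longleftrightarrow> odd i'" "x = enc i a" "y = enc i' b"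
proof -
  from assms obtain i a b where b: "i < m" "a < s" "b < s"
    and c: "(x = enc i a \<and> y = enc (Suc i mod m) b) \<or> (y = enc i a \<and> x = enc (Suc i mod m) b)"
    by (rule edge_cases)
  have p: "even i \<longleftrightarrow> odd (Suc i mod m)" using suc_mod_parity b by simp
  show ?thesis using c
  proof
    assume "x = enc i a \<and> y = enc (Suc i mod m) b"
    then show ?thesis using that b p suc_mod_lt by blast
  next
    assume "y = enc i a \<and> x = enc (Suc i mod m) b"
    then show ?thesis using that[of "Suc i mod m" i b a] b p suc_mod_lt by blast
  qed
qed

lemma local_am: "local_antimagic VV EE ff"
proof -
  have "vsum EE ff x \<noteq> vsum EE ff y" if "{x,y} \<in> EE" for x y
  proof -
    from that obtain i i' a b where b: "i < m" "i' < m" "a < s" "b < s" "even i \<longleftrightarrow> odd i'"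
      and xy: "x = enc i a" "y = enc i' b" by (rule adj_layers)
    have "hh i \<noteq> hh i'" using hh_diff b by blast
    then have "s^3 * hh i \<noteq> s^3 * hh i'" using s3 by simp
    then show ?thesis using xy vsum_val b by simp
  qed
  thus ?thesis using bij_ff by (simp add: local_antimagic_def)
qed

lemma img3: "card (vsum EE ff ` VV) = 3"
proof -
  let ?A = "s^3 * (m div 2) + K" and ?B = "s^3 * (m - 1) + K" and ?C = "s^3 * m + K"
  have "vsum EE ff ` VV \<subseteq> {?A, ?B, ?C}"
  proof
    fix z assume "z \<in> vsum EE ff ` VV"
    then obtain j c where "j < m" "c < s" "z = vsum EE ff (enc j c)" by (auto elim!: VV_cases)
    then show "z \<in> {?A, ?B, ?C}" using vsum_val hh_vals by fastforce
  qed
  moreover have "{?A, ?B, ?C} \<subseteq> vsum EE ff ` VV"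
  proof -
    have "hh 0 = m div 2" "hh 1 = m - 1" "hh 2 = m" by (simp_all add: hh_def)
    moreover have "enc 0 0 \<in> VV" "enc 1 0 \<in> VV" "enc 2 0 \<in> VV" using enc_in m4 s0 by auto
    moreover have "vsum EE ff (enc 0 0) = s^3 * hh 0 + K" "vsum EE ff (enc 1 0) = s^3 * hh 1 + K"
      "vsum EE ff (enc 2 0) = s^3 * hh 2 + K" using vsum_val m4 s0 by auto
    ultimately show ?thesis by (metis empty_subsetI image_eqI insert_subset)
  qed
  ultimately have e: "vsum EE ff ` VV = {?A, ?B, ?C}" by blast
  have "m div 2 < m - 1" "m - 1 < m" using m4 me by (auto elim!: evenE)
  then have "?A < ?B" "?B < ?C" using s3 by simp_all
  then show ?thesis unfolding e by simp
qed

lemma connected: "connected_graph VV EE"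
proof -
  let ?R = "{(u, v). {u, v} \<in> EE}"
  have symR: "\<And>u v. (u,v) \<in> ?R \<Longrightarrow> (v,u) \<in> ?R" by (simp add: insert_commute)
  have step: "(enc i a, enc (Suc i mod m) b) \<in> ?R" "(enc (Suc i mod m) b, enc i a) \<in> ?R"
    if "i < m" "a < s" "b < s" for i a b
    using edge_in[OF that] by (simp_all add: insert_commute)
  have reach: "\<forall>c<s. (enc 0 0, enc j c) \<in> ?R\<^sup>*" if "j < m" for j
    using that
  proof (induction j)
    case 0
    show ?case
    proof (intro allI impI)
      fix c assume c: "c < s"
      have "(enc 0 0, enc (Suc 0 mod m) 0) \<in> ?R" using step(1)[of 0 0 0] s0 m4 by simp
      moreover have "(enc (Suc 0 mod m) 0, enc 0 c) \<in> ?R" using step(2)[of 0 c 0] s0 m4 c by simp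
      ultimately show "(enc 0 0, enc 0 c) \<in> ?R\<^sup>*" by (meson converse_rtrancl_into_rtrancl r_into_rtrancl)
    qed
  next
    case (Suc j)
    show ?case
    proof (intro allI impI)
      fix c assume c: "c < s"
      have "(enc 0 0, enc j 0) \<in> ?R\<^sup>*" using Suc s0 by simp
      moreover have "(enc j 0, enc (Suc j mod m) c) \<in> ?R" using step(1)[of j 0 c] Suc.prems s0 c by simp
      moreover have "Suc j mod m = Suc j" using Suc.prems by simp
      ultimately show "(enc 0 0, enc (Suc j) c) \<in> ?R\<^sup>*" by (metis rtrancl_into_rtrancl)
    qed
  qed
  have r0: "(enc 0 0, v) \<in> ?R\<^sup>*" if "v \<in> VV" for v
    using that by (auto elim!: VV_cases simp: reach)
  have conv: "(v, enc 0 0) \<in> ?R\<^sup>*" if "v \<in> VV" for v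
  proof -
    have "(enc 0 0, v) \<in> ?R\<^sup>*" using r0 that .
    then have "(v, enc 0 0) \<in> (?R\<inverse>)\<^sup>*" by (simp add: rtrancl_converse)
    moreover have "?R\<inverse> = ?R" using symR by auto
    ultimately show ?thesis by simp
  qed
  have "VV \<noteq> {}" using enc_in[of 0 0] m4 s0 by auto
  thus ?thesis unfolding connected_graph_def using r0 conv by (meson rtrancl_trans)
qed

lemma EE_ne: "EE \<noteq> {}" using edge_in[of 0 0 0] m4 s0 by auto

lemma chi3: "chi_la VV EE = 3"
  unfolding chi_la_def
proof (rule cInf_eq_minimum)
  show "3 \<in> {k. \<exists>f. local_antimagic VV EE f \<and> card (vsum EE f ` VV) = k}"
    using local_am img3 by blast
next
  fix k assume "k \<in> {k. \<exists>f. local_antimagic VV EE f \<and> card (vsum EE f ` VV) = k}"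
  then obtain f where "local_antimagic VV EE f" "card (vsum EE f ` VV) = k" by blast
  then show "3 \<le> k" using chi_lower[OF simple regular _ _ EE_ne] s0 by auto
qed

lemma chrom2: "chromatic_number VV EE = 2"
  unfolding chromatic_number_def
proof (rule cInf_eq_minimum)
  have "proper_colouring VV EE 2 (\<lambda>v. (v div s) mod 2)"
    unfolding proper_colouring_def
  proof (intro conjI ballI impI allI)
    fix x y assume "x \<in> VV" "y \<in> VV" "{x,y} \<in> EE"
    from \<open>{x,y} \<in> EE\<close> obtain i i' a b where b: "i < m" "i' < m" "a < s" "b < s" "even i \<longleftrightarrow> odd i'"
      and xy: "x = enc i a" "y = enc i' b" by (rule adj_layers)
    show "x div s mod 2 \<noteq> y div s mod 2" using xy b enc_div by auto
  qed simp
  then show "2 \<in> {k. \<exists>c. proper_colouring VV EE k c}" by blast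
next
  fix k assume "k \<in> {k. \<exists>c. proper_colouring VV EE k c}"
  then obtain c where pc: "proper_colouring VV EE k c" by blast
  have e: "{enc 0 0, enc (Suc 0 mod m) 0} \<in> EE" using edge_in[of 0 0 0] m4 s0 by simp
  have v: "enc 0 0 \<in> VV" "enc (Suc 0 mod m) 0 \<in> VV" using enc_in m4 s0 by auto
  have "c (enc 0 0) \<noteq> c (enc (Suc 0 mod m) 0)" "c (enc 0 0) < k" "c (enc (Suc 0 mod m) 0) < k"
    using pc e v unfolding proper_colouring_def by auto
  then show "2 \<le> k" by linarith
qed

end

theorem mainTheorem7:
  fixes r :: nat
  assumes "even r" and "r \<ge> 2"
  shows "\<forall>N::nat. \<exists>(V :: nat set) (E :: nat set set).
           simple_graph V E \<and> connected_graph V E \<and> regular V E r \<and>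
           even (card V) \<and> card V \<ge> N \<and>
           chi_la V E = 3 \<and> chromatic_number V E = 2"
proof
  fix N :: nat
  define s where "s = r div 2"
  define m where "m = 2*N + 4"
  interpret cyc s m
    by unfold_locales (use assms in \<open>auto simp: s_def m_def\<close>)
  have r: "r = 2*s" using assms by (simp add: s_def)
  have "(2*N+4)*1 \<le> (2*N+4)*s" using s0 by (intro mult_left_mono) auto
  moreover have "N \<le> (2*N+4)*1" by simp
  ultimately have "N \<le> (2*N+4)*s" by (rule le_trans[rotated])
  then have "card VV \<ge> N" using cardV unfolding m_def by simp
  moreover have "even (card VV)" using cardV by (simp add: m_def)
  ultimately show "\<exists>(V :: nat set) (E :: nat set set).
           simple_graph V E \<and> connected_graph V E \<and> regular V E r \<and>
           even (card V) \<and> card V \<ge> N \<and>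
           chi_la V E = 3 \<and> chromatic_number V E = 2"
    using simple connected regular chi3 chrom2 r by blast
qed


end
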